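(* Let $\mathbf z^{(\varepsilon)}=(z^{(\varepsilon)}_i)_{i=1}^{N(\varepsilon)}$, $0<\varepsilon<1$, be centered infinitesimally rigid crystals such that $|z^{(\varepsilon)}_i|\le R\varepsilon^{-1}$ for some $R>0$ and all $i,\varepsilon$, $\varepsilon^d\sum_i\delta_{\varepsilon z^{(\varepsilon)}_i}\Rightarrow\rho(y)dy$ weakly as $\varepsilon\downarrow0$, $\int\rho>0$, and $\bar Q=(\int y^\alpha y^\beta\rho(y)dy)_{\alpha\beta}$ is diagonal with diagonal entries $\bar q^\alpha$. Then: (i) for every $\nu>0$ there exists $\varepsilon_0>0$ such that $\sup_{0<\varepsilon\le\varepsilon_0}\sup_{\mathbf x\in\mathcal M^{(\varepsilon)}_\infty(\varepsilon^{\nu-1}\wedge\bar c(\mathbf z^{(\varepsilon)}))}\|\Phi^{(\varepsilon)}(\mathbf x)^{-1}\|<\infty$; (ii) for every $\nu>0$, $\lim_{\varepsilon\downarrow0}\sup_{\mathbf x\in\mathcal M^{(\varepsilon)}_\infty(\varepsilon^{\nu-1}\wedge\bar c(\mathbf z^{(\varepsilon)}))}\|\Phi^{(\varepsilon)}(\mathbf x)^{-1}-\Phi^{-1}\|=0$.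
   Context: Let $d\ge1$, $a>0$, $b>0$. A crystal is $\mathbf z=(z_i)_{i=1}^N\in(\mathbb R^d)^N$ with $|z_i-z_j|=a$ or $>b$ for $i\ne j$; neighboring pairs $\langle i,j\rangle$: $|z_i-z_j|=a$; centered: $\sum_iz_i=0$; infinitesimally rigid: $\sum_{\langle i,j\rangle}(h_i-h_j,z_i-z_j)^2=0$ only for $\mathbf h=(Xz_i+h)_i$ with $X\in\mathfrak{so}(d)$, $h\in\mathbb R^d$. $\mathcal M=\{(\theta z_i+\eta)_i:\theta\in SO(d),\eta\in\mathbb R^d\}$; $\bar c(\mathbf z)>0$ is a constant such that each $\mathbf x$ with $\inf_{\mathbf y\in\mathcal M}\max_i|x_i-y_i|\le\bar c(\mathbf z)$ has a unique minimizer $\mathbf z(\mathbf x)\in\mathcal M$ of $(\sum_i|x_i-y_i|^2)^{1/2}$; $\mathcal M_\infty(c)=\{\mathbf x:\max_i|x_i-\mathbf z(\mathbf x)_i|\le c\}$, written $\mathcal M^{(\varepsilon)}_\infty(c)$ for $\mathbf z=\mathbf z^{(\varepsilon)}$; $\theta(\mathbf x)\in SO(d)$ is defined by $\mathbf z(\mathbf x)=(\theta(\mathbf x)z^{(\varepsilon)}_i+\eta)_i$. $M(d)$ carries $(X,Y)=\mathrm{Tr}(X\,{}^tY)$, $|X|=\sqrt{(X,X)}$; $\mathrm{Proj}X=(X-{}^tX)/2$. $\kappa=d+2$; $Q^{(\varepsilon)}(\mathbf x)=\sum_iz^{(\varepsilon)}_i\otimes x_i$ with $(e\otimes\tilde e)^{\alpha\beta}=e^\alpha\tilde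 e^\beta$. Operators on $\mathfrak{so}(d)$: $\Phi X=\mathrm{Proj}(\bar QX)$ and $\Phi^{(\varepsilon)}(\mathbf x)X=\mathrm{Proj}(\varepsilon^\kappa Q^{(\varepsilon)}(\mathbf x)\theta(\mathbf x)X)$; $\|\cdot\|$ is the operator norm induced by $|\cdot|$. *)

theory Defs
  imports "HOL-Analysis.Analysis"
begin

text \<open>Configurations of N points in R^d are functions nat => real^'d; only indices i < N matter.\<close>

definition SOd :: "(real^'d^'d) set" where
  "SOd = {\<theta>. orthogonal_matrix \<theta> \<and> det \<theta> = 1}"

definition sod :: "(real^'d^'d) set" where
  "sod = {X. transpose X = - X}"

definition Proj :: "real^'d^'d \<Rightarrow> real^'d^'d" where
  "Proj X = (1/2) *\<^sub>R (X - transpose X)"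

definition crystal :: "real \<Rightarrow> real \<Rightarrow> nat \<Rightarrow> (nat \<Rightarrow> real^'d) \<Rightarrow> bool" where
  "crystal a b N z \<longleftrightarrow>
     (\<forall>i<N. \<forall>j<N. i \<noteq> j \<longrightarrow> norm (z i - z j) = a \<or> norm (z i - z j) > b)"

definition centered :: "nat \<Rightarrow> (nat \<Rightarrow> real^'d) \<Rightarrow> bool" where
  "centered N z \<longleftrightarrow> (\<Sum>i<N. z i) = 0"

definition neighbors :: "real \<Rightarrow> nat \<Rightarrow> (nat \<Rightarrow> real^'d) \<Rightarrow> (nat \<times> nat) set" where
  "neighbors a N z = {(i, j). i < N \<and> j < N \<and> i < j \<and> norm (z i - z j) = a}"

definition inf_rigid :: "real \<Rightarrow> nat \<Rightarrow> (nat \<Rightarrow> real^'d) \<Rightarrow> bool" where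
  "inf_rigid a N z \<longleftrightarrow>
     (\<forall>h :: nat \<Rightarrow> real^'d.
        (\<Sum>(i, j)\<in>neighbors a N z. ((h i - h j) \<bullet> (z i - z j))\<^sup>2) = 0 \<longrightarrow>
        (\<exists>X\<in>sod. \<exists>h0. \<forall>i<N. h i = X *v z i + h0))"

definition rig_motions :: "nat \<Rightarrow> (nat \<Rightarrow> real^'d) \<Rightarrow> (nat \<Rightarrow> real^'d) set" where
  "rig_motions N z = {(\<lambda>i. if i < N then \<theta> *v z i + \<eta> else 0) | \<theta> \<eta>. \<theta> \<in> SOd}"

definition l2dist :: "nat \<Rightarrow> (nat \<Rightarrow> real^'d) \<Rightarrow> (nat \<Rightarrow> real^'d) \<Rightarrow> real" where
  "l2dist N x y = sqrt (\<Sum>i<N. (norm (x i - y i))\<^sup>2)"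

definition maxdist :: "nat \<Rightarrow> (nat \<Rightarrow> real^'d) \<Rightarrow> (nat \<Rightarrow> real^'d) \<Rightarrow> real" where
  "maxdist N x y = Max (insert 0 ((\<lambda>i. norm (x i - y i)) ` {..<N}))"

definition dist_M :: "nat \<Rightarrow> (nat \<Rightarrow> real^'d) \<Rightarrow> (nat \<Rightarrow> real^'d) \<Rightarrow> real" where
  "dist_M N z x = Inf ((\<lambda>y. maxdist N x y) ` rig_motions N z)"

definition cbar_ok :: "nat \<Rightarrow> (nat \<Rightarrow> real^'d) \<Rightarrow> real \<Rightarrow> bool" where
  "cbar_ok N z c \<longleftrightarrow> c > 0 \<and>
     (\<forall>x. dist_M N z x \<le> c \<longrightarrow>
        (\<exists>!y. y \<in> rig_motions N z \<and> (\<forall>y'\<in>rig_motions N z. l2dist N x y \<le> l2dist N x y')))"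

definition proj_M :: "nat \<Rightarrow> (nat \<Rightarrow> real^'d) \<Rightarrow> (nat \<Rightarrow> real^'d) \<Rightarrow> (nat \<Rightarrow> real^'d)" where
  "proj_M N z x = (THE y. y \<in> rig_motions N z \<and> (\<forall>y'\<in>rig_motions N z. l2dist N x y \<le> l2dist N x y'))"

text \<open>M_infty(c), relative to the admissible constant cb on whose domain z(x) is defined.\<close>
definition Minf :: "nat \<Rightarrow> (nat \<Rightarrow> real^'d) \<Rightarrow> real \<Rightarrow> real \<Rightarrow> (nat \<Rightarrow> real^'d) set" where
  "Minf N z cb c = {x. dist_M N z x \<le> cb \<and> maxdist N x (proj_M N z x) \<le> c}"

definition theta_of :: "nat \<Rightarrow> (nat \<Rightarrow> real^'d) \<Rightarrow> (nat \<Rightarrow> real^'d) \<Rightarrow> real^'d^'d" where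
  "theta_of N z x = (SOME \<theta>. \<theta> \<in> SOd \<and> (\<exists>\<eta>. \<forall>i<N. proj_M N z x i = \<theta> *v z i + \<eta>))"

definition Qmat :: "nat \<Rightarrow> (nat \<Rightarrow> real^'d) \<Rightarrow> (nat \<Rightarrow> real^'d) \<Rightarrow> real^'d^'d" where
  "Qmat N z x = (\<chi> \<alpha> \<beta>. \<Sum>i<N. z i $ \<alpha> * x i $ \<beta>)"

definition Phi_eps :: "real \<Rightarrow> nat \<Rightarrow> (nat \<Rightarrow> real^'d) \<Rightarrow> (nat \<Rightarrow> real^'d)
    \<Rightarrow> real^'d^'d \<Rightarrow> real^'d^'d" where
  "Phi_eps eps N z x X =
     Proj (((eps ^ (CARD('d) + 2)) *\<^sub>R Qmat N z x) ** theta_of N z x ** X)"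

definition Phi :: "real^'d^'d \<Rightarrow> real^'d^'d \<Rightarrow> real^'d^'d" where
  "Phi Qb X = Proj (Qb ** X)"

definition Qbar :: "(real^'d \<Rightarrow> real) \<Rightarrow> real^'d^'d" where
  "Qbar \<rho> = (\<chi> \<alpha> \<beta>. LINT y|lborel. y $ \<alpha> * y $ \<beta> * \<rho> y)"

text \<open>Inverse of an operator on so(d), and the operator norm induced by the Frobenius norm
  (the norm of real^'d^'d is the Frobenius norm sqrt(Tr(X X^t))).\<close>
definition so_inv :: "(real^'d^'d \<Rightarrow> real^'d^'d) \<Rightarrow> real^'d^'d \<Rightarrow> real^'d^'d" where
  "so_inv L = inv_into sod L"

definition so_opnorm :: "(real^'d^'d \<Rightarrow> real^'d^'d) \<Rightarrow> real" where
  "so_opnorm T = Sup ((\<lambda>X. norm (T X)) ` {X \<in> sod. norm X \<le> 1})"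

end

theory Submission
  imports Defs
begin


definition LQ :: "real^'d^'d \<Rightarrow> real^'d^'d \<Rightarrow> real^'d^'d" where
  "LQ Q X = Proj (Q ** X)"

definition l1m :: "real^'d^'d \<Rightarrow> real" where
  "l1m E = (\<Sum>i\<in>UNIV. \<Sum>j\<in>UNIV. \<bar>E$i$j\<bar>)"

lemma inner_mat: "(A::real^'d^'d) \<bullet> B = (\<Sum>i\<in>UNIV. \<Sum>j\<in>UNIV. A$i$j * B$i$j)"
  by (simp add: inner_vec_def)

lemma sod_iff: "X \<in> sod \<longleftrightarrow> (\<forall>i j. X$j$i = - X$i$j)"
  unfolding sod_def vec_eq_iff transpose_def by simp

lemma transpose_add': "transpose ((A::real^'d^'d) + B) = transpose A + transpose B"
  by (simp add: vec_eq_iff transpose_def)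

lemma transpose_zero': "transpose (0::real^'d^'d) = 0"
  by (simp add: vec_eq_iff transpose_def)

lemma Proj_comp: "Proj A $ i $ j = (A$i$j - A$j$i) / 2"
  by (simp add: Proj_def transpose_def)

lemma Proj_sod: "Proj A \<in> sod"
  by (simp add: sod_iff Proj_comp field_simps)

lemma subspace_sod: "subspace (sod :: (real^'d^'d) set)"
  unfolding subspace_def sod_def by (simp add: transpose_add' transpose_zero' transpose_scalar)

lemma Proj_inner:
  assumes "X \<in> sod" shows "Proj A \<bullet> X = A \<bullet> X"
proof -
  have sk: "X$i$j = - X$j$i" for i j using assms unfolding sod_iff by blast
  have "(\<Sum>i\<in>UNIV. \<Sum>j\<in>UNIV. A$j$i * X$i$j) = (\<Sum>j\<in>UNIV. \<Sum>i\<in>UNIV. A$j$i * X$i$j)"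
    by (rule sum.swap)
  also have "\<dots> = - (\<Sum>j\<in>UNIV. \<Sum>i\<in>UNIV. A$j$i * X$j$i)"
  proof -
    have "A$j$i * X$i$j = - (A$j$i * X$j$i)" for i j using sk[of i j] by simp
    then show ?thesis by (simp add: sum_negf)
  qed
  finally have e: "(\<Sum>i\<in>UNIV. \<Sum>j\<in>UNIV. A$j$i * X$i$j) = - (\<Sum>i\<in>UNIV. \<Sum>j\<in>UNIV. A$i$j * X$i$j)" .
  have "Proj A \<bullet> X = (\<Sum>i\<in>UNIV. \<Sum>j\<in>UNIV. (A$i$j * X$i$j - A$j$i * X$i$j)/2)"
    by (simp add: inner_mat Proj_comp field_simps)
  also have "\<dots> = (\<Sum>i\<in>UNIV. \<Sum>j\<in>UNIV. (A$i$j * X$i$j - A$j$i * X$i$j))/2"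
    by (simp only: sum_divide_distrib)
  also have "\<dots> = ((\<Sum>i\<in>UNIV. \<Sum>j\<in>UNIV. A$i$j * X$i$j) - (\<Sum>i\<in>UNIV. \<Sum>j\<in>UNIV. A$j$i * X$i$j))/2"
    by (simp only: sum_subtractf)
  also have "\<dots> = A \<bullet> X" by (simp add: e inner_mat)
  finally show ?thesis .
qed

lemma norm_Proj: "norm (Proj A) \<le> norm A"
proof -
  have "norm (Proj A) ^ 2 = Proj A \<bullet> Proj A" by (simp add: power2_norm_eq_inner)
  also have "\<dots> = A \<bullet> Proj A" by (rule Proj_inner[OF Proj_sod])
  also have "\<dots> \<le> norm A * norm (Proj A)" by (rule norm_cauchy_schwarz)
  finally have "norm (Proj A) * norm (Proj A) \<le> norm A * norm (Proj A)" by (simp add: power2_eq_square)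
  then show ?thesis
    by (cases "norm (Proj A) = 0") (simp_all add: mult_le_cancel_right)
qed

lemma linear_Proj: "linear Proj"
  by (rule linearI) (auto simp: Proj_def transpose_def vec_eq_iff algebra_simps)

lemma linear_LQ: "linear (LQ Q)"
proof -
  have "linear (\<lambda>X. Q ** X)" by (rule linearI) (simp_all add: vec_eq_iff matrix_matrix_mult_def sum_distrib_left distrib_left sum.distrib mult_ac)
  moreover have "LQ Q = Proj \<circ> (\<lambda>X. Q ** X)" by (simp add: fun_eq_iff LQ_def)
  ultimately show ?thesis using linear_Proj linear_compose by metis
qed

lemma norm_vec_le_sum: "norm (x::'a::real_normed_vector^'n) \<le> (\<Sum>i\<in>UNIV. norm (x$i))"
  unfolding norm_vec_def by (rule L2_set_le_sum) simp

lemma norm_mult_l1: "norm (E ** X) \<le> l1m E * norm (X::real^'d^'d)"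
proof -
  have row: "(E ** X) $ a = (\<Sum>k\<in>UNIV. E$a$k *\<^sub>R X$k)" for a
    by (simp add: vec_eq_iff matrix_matrix_mult_def sum_component)
  have "norm ((E ** X) $ a) \<le> (\<Sum>k\<in>UNIV. \<bar>E$a$k\<bar> * norm X)" for a
  proof -
    have "norm ((E ** X) $ a) \<le> (\<Sum>k\<in>UNIV. norm (E$a$k *\<^sub>R X$k))" unfolding row by (rule norm_sum)
    also have "\<dots> \<le> (\<Sum>k\<in>UNIV. \<bar>E$a$k\<bar> * norm X)"
      by (intro sum_mono) (simp add: mult_left_mono Finite_Cartesian_Product.norm_nth_le)
    finally show ?thesis .
  qed
  then have "(\<Sum>a\<in>UNIV. norm ((E ** X) $ a)) \<le> (\<Sum>a\<in>UNIV. \<Sum>k\<in>UNIV. \<bar>E$a$k\<bar> * norm X)"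
    by (intro sum_mono)
  also have "\<dots> = l1m E * norm X" by (simp add: l1m_def sum_distrib_right)
  finally show ?thesis using norm_vec_le_sum[of "E ** X"] by linarith
qed

lemma matrix_diff_rdistrib: "((A::real^'d^'d) - B) ** X = A ** X - B ** X"
  by (simp add: vec_eq_iff matrix_matrix_mult_def sum_subtractf left_diff_distrib)

lemma coer_lb:
  fixes Q :: "real^'d^'d"
  assumes c: "c > 0" and coer: "\<And>X. X \<in> sod \<Longrightarrow> (Q ** X) \<bullet> X \<ge> c * (norm X)^2"
    and that: "X \<in> sod"
  shows "c * norm X \<le> norm (LQ Q X)"
proof -
  have "c * (norm X)^2 \<le> LQ Q X \<bullet> X" using coer[OF that] Proj_inner[OF that] by (simp add: LQ_def)
  also have "\<dots> \<le> norm (LQ Q X) * norm X" by (rule norm_cauchy_schwarz)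
  finally have "(c * norm X) * norm X \<le> norm (LQ Q X) * norm X" by (simp add: power2_eq_square mult.assoc)
  then show ?thesis
    by (cases "norm X = 0") (simp_all add: mult_le_cancel_right)
qed

lemma coer_bij:
  fixes Q :: "real^'d^'d"
  assumes c: "c > 0" and coer: "\<And>X. X \<in> sod \<Longrightarrow> (Q ** X) \<bullet> X \<ge> c * (norm X)^2"
  shows "bij_betw (LQ Q) sod sod"
proof -
  note lb = coer_lb[OF c coer]
  have lin: "linear (LQ Q)" by (rule linear_LQ)
  have inj: "inj_on (LQ Q) sod"
  proof (rule inj_onI)
    fix X Y assume XY: "X \<in> sod" "Y \<in> sod" "LQ Q X = LQ Q Y"
    have "X - Y \<in> sod" using XY subspace_diff[OF subspace_sod] by blast
    moreover have "LQ Q (X - Y) = 0" using XY linear_diff[OF lin] by simp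
    ultimately have "c * norm (X - Y) \<le> 0" using lb by fastforce
    then show "X = Y" using c by (simp add: mult_le_0_iff)
  qed
  have sub: "LQ Q ` sod \<subseteq> sod" by (auto simp: LQ_def Proj_sod)
  have "dim (LQ Q ` sod) = dim (sod::(real^'d^'d) set)"
  proof -
    have "span sod = sod" using span_eq_iff subspace_sod by blast
    then have "inj_on (LQ Q) (span sod)" using inj by metis
    then show ?thesis using dim_image_eq[OF lin, of sod] by blast
  qed
  then have "LQ Q ` sod = sod"
    using subspace_dim_equal[OF real_vector.linear_subspace_image[OF lin subspace_sod] subspace_sod sub] by simp
  then show "bij_betw (LQ Q) sod sod" using inj by (simp add: bij_betw_def)
qed

lemma opnorm_le:
  assumes "C \<ge> 0" "\<And>X. X \<in> sod \<Longrightarrow> norm X \<le> 1 \<Longrightarrow> norm (T X) \<le> C"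
  shows "so_opnorm T \<le> C"
  unfolding so_opnorm_def
proof (rule cSup_least)
  have "(0::real^'d^'d) \<in> sod" by (simp add: sod_def transpose_zero')
  then show "(\<lambda>X. norm (T X)) ` {X \<in> sod. norm X \<le> 1} \<noteq> {}" by force
qed (use assms in auto)

lemma so_inv_props:
  assumes "bij_betw f sod sod" "Y \<in> sod"
  shows "so_inv f Y \<in> sod" "f (so_inv f Y) = Y"
  using assms unfolding so_inv_def bij_betw_def
  by (auto intro: inv_into_into f_inv_into_f)

lemma abstract:
  fixes Q Qb :: "real^'d^'d"
  assumes q: "q > 0" and coer: "\<And>X. X \<in> sod \<Longrightarrow> (Qb ** X) \<bullet> X \<ge> q * (norm X)^2"
    and small: "l1m (Q - Qb) \<le> \<delta>" "\<delta> \<le> q/2"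
  shows "bij_betw (LQ Q) sod sod" "bij_betw (LQ Qb) sod sod"
    "so_opnorm (so_inv (LQ Q)) \<le> 2/q"
    "so_opnorm (\<lambda>Y. so_inv (LQ Q) Y - so_inv (LQ Qb) Y) \<le> 2*\<delta>/q^2"
proof -
  have "0 \<le> l1m (Q - Qb)" unfolding l1m_def by (intro sum_nonneg) simp
  then have d0: "\<delta> \<ge> 0" using small(1) by linarith
  have coerQ: "(Q ** X) \<bullet> X \<ge> (q/2) * (norm X)^2" if X: "X \<in> sod" for X
  proof -
    have "\<bar>((Q - Qb) ** X) \<bullet> X\<bar> \<le> norm ((Q - Qb) ** X) * norm X" by (rule Cauchy_Schwarz_ineq2)
    also have "\<dots> \<le> (\<delta> * norm X) * norm X"
      by (intro mult_right_mono order_trans[OF norm_mult_l1] mult_right_mono small) auto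
    finally have "\<bar>((Q - Qb) ** X) \<bullet> X\<bar> \<le> \<delta> * (norm X)^2" by (simp add: power2_eq_square mult.assoc)
    moreover have "(Q ** X) \<bullet> X = (Qb ** X) \<bullet> X + ((Q - Qb) ** X) \<bullet> X"
      by (simp add: matrix_diff_rdistrib inner_diff_left)
    moreover have "\<delta> * (norm X)^2 \<le> (q/2) * (norm X)^2" using small by (intro mult_right_mono) auto
    ultimately show ?thesis using coer[OF X] by linarith
  qed
  have q2: "q/2 > 0" using q by simp
  have bQ1: "bij_betw (LQ Q) sod sod" using coer_bij[of "q/2" Q] q2 coerQ by blast
  have bQ2: "q/2 * norm X \<le> norm (LQ Q X)" if "X \<in> sod" for X using coer_lb[of "q/2" Q X] q2 coerQ that by blast
  have bQb1: "bij_betw (LQ Qb) sod sod" using coer_bij[of q Qb] q coer by blast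
  have bQb2: "q * norm X \<le> norm (LQ Qb X)" if "X \<in> sod" for X using coer_lb[of q Qb X] q coer that by blast
  note bQ = bQ1 bQ2 and bQb = bQb1 bQb2
  show bij1: "bij_betw (LQ Q) sod sod" by (rule bQ(1))
  show bij2: "bij_betw (LQ Qb) sod sod" by (rule bQb(1))
  have invb: "norm (so_inv (LQ Q) Y) \<le> 2/q * norm Y" if "Y \<in> sod" for Y
  proof -
    have "q/2 * norm (so_inv (LQ Q) Y) \<le> norm Y"
      using bQ(2)[OF so_inv_props(1)[OF bij1 that]] so_inv_props(2)[OF bij1 that] by simp
    then show ?thesis using q by (simp add: field_simps)
  qed
  show "so_opnorm (so_inv (LQ Q)) \<le> 2/q"
  proof (rule opnorm_le)
    fix Y :: "real^'d^'d" assume "Y \<in> sod" "norm Y \<le> 1"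
    then show "norm (so_inv (LQ Q) Y) \<le> 2/q"
    proof -
      have "2/q * norm Y \<le> 2/q * 1" using \<open>norm Y \<le> 1\<close> q by (intro mult_left_mono) auto
      then show ?thesis using invb[of Y] \<open>Y \<in> sod\<close> by simp
    qed
  qed (use q in simp)
  show "so_opnorm (\<lambda>Y. so_inv (LQ Q) Y - so_inv (LQ Qb) Y) \<le> 2*\<delta>/q^2"
  proof (rule opnorm_le)
    fix Y :: "real^'d^'d" assume Y: "Y \<in> sod" "norm Y \<le> 1"
    define X where "X = so_inv (LQ Q) Y"
    define Xb where "Xb = so_inv (LQ Qb) Y"
    have X: "X \<in> sod" "LQ Q X = Y" using so_inv_props[OF bij1 Y(1)] by (simp_all add: X_def)
    have Xb: "Xb \<in> sod" "LQ Qb Xb = Y" using so_inv_props[OF bij2 Y(1)] by (simp_all add: Xb_def)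
    have "X - Xb \<in> sod" using X Xb subspace_diff[OF subspace_sod] by blast
    then have "q * norm (X - Xb) \<le> norm (LQ Qb (X - Xb))" by (rule bQb(2))
    also have "LQ Qb (X - Xb) = LQ Qb X - LQ Q X"
    proof -
      have "LQ Qb (X - Xb) = LQ Qb X - LQ Qb Xb" by (rule linear_diff[OF linear_LQ])
      then show ?thesis using X(2) Xb(2) by simp
    qed
    also have "\<dots> = - Proj ((Q - Qb) ** X)"
      by (simp add: LQ_def matrix_diff_rdistrib linear_diff[OF linear_Proj])
    also have "norm \<dots> \<le> norm ((Q - Qb) ** X)" using norm_Proj by simp
    also have "\<dots> \<le> \<delta> * norm X"
      by (intro order_trans[OF norm_mult_l1] mult_right_mono small) auto
    also have "\<dots> \<le> \<delta> * (2/q)"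
    proof -
      have "norm X \<le> 2/q * norm Y" using invb[OF Y(1)] by (simp add: X_def)
      also have "\<dots> \<le> 2/q * 1" using Y(2) q by (intro mult_left_mono) auto
      finally show ?thesis using d0 by (intro mult_left_mono) auto
    qed
    finally have "q * norm (X - Xb) \<le> \<delta> * (2/q)" .
    then show "norm (so_inv (LQ Q) Y - so_inv (LQ Qb) Y) \<le> 2*\<delta>/q^2"
      using q by (simp add: X_def Xb_def field_simps power2_eq_square)
  qed (use q d0 in simp)
qed



lemma Qmat_split: "Qmat N z x = Qmat N z y + Qmat N z (\<lambda>i. x i - y i)"
  by (simp add: vec_eq_iff Qmat_def sum.distrib[symmetric] algebra_simps)

lemma orth_vm: "orthogonal_matrix \<theta> \<Longrightarrow> (\<theta> *v v) v* \<theta> = (v::real^'d)"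
  by (simp add: transpose_matrix_vector[symmetric] matrix_vector_mul_assoc orthogonal_matrix)

lemma Qmat_rig:
  fixes \<theta> :: "real^'d^'d"
  assumes cen: "centered N z" and orth: "orthogonal_matrix \<theta>"
    and y: "\<And>i. i < N \<Longrightarrow> y i = \<theta> *v z i + \<eta>"
  shows "Qmat N z y ** \<theta> = Qmat N z z"
proof -
  have s0: "(\<Sum>i<N. z i $ a) = 0" for a
    using cen unfolding centered_def by (metis sum_component zero_index)
  have "(Qmat N z y ** \<theta>) $ a $ b = Qmat N z z $ a $ b" for a b
  proof -
    have "(Qmat N z y ** \<theta>) $ a $ b = (\<Sum>k\<in>UNIV. (\<Sum>i<N. z i $ a * y i $ k) * \<theta> $ k $ b)"
      by (simp add: matrix_matrix_mult_def Qmat_def)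
    also have "\<dots> = (\<Sum>i<N. z i $ a * (\<Sum>k\<in>UNIV. y i $ k * \<theta> $ k $ b))"
      by (simp add: sum_distrib_left sum_distrib_right mult.assoc sum.swap[of _ UNIV])
    also have "\<dots> = (\<Sum>i<N. z i $ a * ((y i) v* \<theta>) $ b)"
      by (simp add: vector_matrix_mult_def mult.commute)
    also have "\<dots> = (\<Sum>i<N. z i $ a * (z i $ b + (\<eta> v* \<theta>) $ b))"
    proof (rule sum.cong)
      fix i assume "i \<in> {..<N}"
      then have "y i v* \<theta> = z i + \<eta> v* \<theta>"
        using y orth_vm[OF orth] by (simp add: vector_matrix_left_distrib)
      then show "z i $ a * (y i v* \<theta>) $ b = z i $ a * (z i $ b + (\<eta> v* \<theta>) $ b)" by simp
    qed simp
    also have "\<dots> = (\<Sum>i<N. z i $ a * z i $ b) + (\<Sum>i<N. z i $ a) * (\<eta> v* \<theta>) $ b"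
      by (simp add: distrib_left sum.distrib sum_distrib_right)
    also have "\<dots> = Qmat N z z $ a $ b" by (simp add: s0 Qmat_def)
    finally show ?thesis .
  qed
  then show ?thesis by (simp add: vec_eq_iff)
qed

lemma orth_entry: "orthogonal_matrix \<theta> \<Longrightarrow> \<bar>\<theta> $ k $ b\<bar> \<le> (1::real)"
proof -
  assume o: "orthogonal_matrix \<theta>"
  have "norm (row k \<theta>) = 1" using o orthogonal_matrix_orthonormal_rows by blast
  moreover have "\<bar>row k \<theta> $ b\<bar> \<le> norm (row k \<theta>)" by (rule component_le_norm_cart)
  moreover have "row k \<theta> $ b = \<theta> $ k $ b" by (simp add: row_def)
  ultimately show ?thesis by simp
qed

lemma err_entry:
  fixes \<theta> :: "real^'d^'d"
  assumes orth: "orthogonal_matrix \<theta>"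
  shows "\<bar>(Qmat N z w ** \<theta>) $ a $ b\<bar> \<le> CARD('d) * (\<Sum>i<N. norm (z i) * norm (w i))"
proof -
  let ?S = "(\<Sum>i<N. norm (z i) * norm (w i))"
  have m: "\<bar>Qmat N z w $ a $ k\<bar> \<le> ?S" for k
  proof -
    have "\<bar>Qmat N z w $ a $ k\<bar> \<le> (\<Sum>i<N. \<bar>z i $ a * w i $ k\<bar>)"
      unfolding Qmat_def by (simp add: sum_abs)
    also have "\<dots> \<le> ?S"
      by (intro sum_mono) (simp add: abs_mult mult_mono component_le_norm_cart)
    finally show ?thesis .
  qed
  have "\<bar>(Qmat N z w ** \<theta>) $ a $ b\<bar> \<le> (\<Sum>k\<in>UNIV. \<bar>Qmat N z w $ a $ k * \<theta> $ k $ b\<bar>)"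
    unfolding matrix_matrix_mult_def by (simp add: sum_abs)
  also have "\<dots> \<le> (\<Sum>k\<in>(UNIV::'d set). ?S)"
  proof (intro sum_mono)
    fix k
    have "\<bar>Qmat N z w $ a $ k\<bar> * \<bar>\<theta> $ k $ b\<bar> \<le> ?S * 1"
      by (intro mult_mono m orth_entry[OF orth]) (auto intro: sum_nonneg)
    then show "\<bar>Qmat N z w $ a $ k * \<theta> $ k $ b\<bar> \<le> ?S" by (simp add: abs_mult)
  qed
  also have "\<dots> = CARD('d) * ?S" by simp
  finally show ?thesis .
qed

lemma l1m_add: "l1m (A + B) \<le> l1m A + l1m B"
  unfolding l1m_def by (simp add: sum.distrib[symmetric] sum_mono abs_triangle_ineq)

lemma l1m_bound:
  fixes A :: "real^'d^'d" and M :: real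
  assumes "\<And>a b. \<bar>A $ a $ b\<bar> \<le> M"
  shows "l1m A \<le> real CARD('d) * real CARD('d) * M"
proof -
  have "(\<Sum>i\<in>UNIV. \<Sum>j\<in>UNIV. \<bar>A $ i $ j\<bar>) \<le> (\<Sum>i\<in>(UNIV::'d set). \<Sum>j\<in>(UNIV::'d set). M)"
    using assms by (intro sum_mono) auto
  then show ?thesis unfolding l1m_def by simp
qed

lemma matrix_add_rdistrib': "((A::real^'d^'d) + B) ** C = A ** C + B ** C"
  by (simp add: vec_eq_iff matrix_matrix_mult_def sum.distrib distrib_right)

lemma scaleR_mmult: "((c::real) *\<^sub>R A) ** B = c *\<^sub>R (A ** (B::real^'d^'d))"
  by (simp add: vec_eq_iff matrix_matrix_mult_def sum_distrib_left mult.assoc)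

lemma proj_in:
  assumes "cbar_ok N z cb" "dist_M N z x \<le> cb"
  shows "proj_M N z x \<in> rig_motions N z"
proof -
  from assms have "\<exists>!y. y \<in> rig_motions N z \<and> (\<forall>y'\<in>rig_motions N z. l2dist N x y \<le> l2dist N x y')"
    unfolding cbar_ok_def by blast
  from theI'[OF this] show ?thesis unfolding proj_M_def by blast
qed

lemma theta_facts:
  assumes "proj_M N z x \<in> rig_motions N z"
  shows "theta_of N z x \<in> SOd \<and> (\<exists>\<eta>. \<forall>i<N. proj_M N z x i = theta_of N z x *v z i + \<eta>)"
proof -
  from assms obtain \<theta> \<eta> where "proj_M N z x = (\<lambda>i. if i < N then \<theta> *v z i + \<eta> else 0)" "\<theta> \<in> SOd"
    unfolding rig_motions_def by blast
  then have "\<exists>\<theta>. \<theta> \<in> SOd \<and> (\<exists>\<eta>. \<forall>i<N. proj_M N z x i = \<theta> *v z i + \<eta>)" by auto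
  from someI_ex[OF this] show ?thesis unfolding theta_of_def .
qed

lemma maxdist_ge: "i < N \<Longrightarrow> norm (x i - y i) \<le> maxdist N x y"
  unfolding maxdist_def by (rule Max_ge) auto

lemma pointwise:
  fixes z :: "nat \<Rightarrow> real^'d" and c K m :: real
  assumes cen: "centered N z" and cb: "cbar_ok N z cb" and x: "x \<in> Minf N z cb m"
    and K: "\<And>i. i < N \<Longrightarrow> norm (z i) \<le> K"
  shows "l1m ((c *\<^sub>R Qmat N z x) ** theta_of N z x - Qb)
     \<le> l1m (c *\<^sub>R Qmat N z z - Qb) + real CARD('d) * real CARD('d) * (\<bar>c\<bar> * (real CARD('d) * (real N * (K * m))))"
proof -
  let ?y = "proj_M N z x" and ?\<theta> = "theta_of N z x"
  have xd: "dist_M N z x \<le> cb" "maxdist N x ?y \<le> m" using x by (auto simp: Minf_def)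
  have th: "?\<theta> \<in> SOd" "\<exists>\<eta>. \<forall>i<N. ?y i = ?\<theta> *v z i + \<eta>"
    using theta_facts[OF proj_in[OF cb xd(1)]] by auto
  have orth: "orthogonal_matrix ?\<theta>" using th(1) by (simp add: SOd_def)
  obtain \<eta> where eta: "\<And>i. i < N \<Longrightarrow> ?y i = ?\<theta> *v z i + \<eta>" using th(2) by blast
  define w where "w = (\<lambda>i. x i - ?y i)"
  have "(c *\<^sub>R Qmat N z x) ** ?\<theta> = c *\<^sub>R (Qmat N z ?y ** ?\<theta>) + c *\<^sub>R (Qmat N z w ** ?\<theta>)"
    by (simp add: scaleR_mmult Qmat_split[of N z x ?y] matrix_add_rdistrib' w_def scaleR_add_right)
  also have "Qmat N z ?y ** ?\<theta> = Qmat N z z" by (rule Qmat_rig[OF cen orth eta])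
  finally have eq: "(c *\<^sub>R Qmat N z x) ** ?\<theta> - Qb = (c *\<^sub>R Qmat N z z - Qb) + c *\<^sub>R (Qmat N z w ** ?\<theta>)"
    by simp
  have S: "(\<Sum>i<N. norm (z i) * norm (w i)) \<le> N * (K * m)"
  proof -
    have "(\<Sum>i<N. norm (z i) * norm (w i)) \<le> (\<Sum>i<N. K * m)"
    proof (rule sum_mono)
      fix i assume "i \<in> {..<N}"
      then have "norm (z i) \<le> K" "norm (w i) \<le> m"
        using K maxdist_ge[of i N x ?y] xd(2) by (auto simp: w_def)
      then show "norm (z i) * norm (w i) \<le> K * m" by (intro mult_mono) (auto intro: order_trans[OF norm_ge_zero])
    qed
    then show ?thesis by simp
  qed
  have ent: "\<bar>(c *\<^sub>R (Qmat N z w ** ?\<theta>)) $ a $ b\<bar> \<le> \<bar>c\<bar> * (CARD('d) * (N * (K * m)))" for a b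
  proof -
    have "\<bar>(c *\<^sub>R (Qmat N z w ** ?\<theta>)) $ a $ b\<bar> = \<bar>c\<bar> * \<bar>(Qmat N z w ** ?\<theta>) $ a $ b\<bar>"
      by (simp add: abs_mult)
    also have "\<dots> \<le> \<bar>c\<bar> * (CARD('d) * (\<Sum>i<N. norm (z i) * norm (w i)))"
      by (intro mult_left_mono err_entry[OF orth]) auto
    also have "\<dots> \<le> \<bar>c\<bar> * (CARD('d) * (N * (K * m)))"
      by (intro mult_left_mono S) auto
    finally show ?thesis .
  qed
  show ?thesis unfolding eq
    using l1m_add[of "c *\<^sub>R Qmat N z z - Qb" "c *\<^sub>R (Qmat N z w ** ?\<theta>)"]
      l1m_bound[of "c *\<^sub>R (Qmat N z w ** ?\<theta>)", OF ent] by linarith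
qed



lemma ring_aux:
  fixes A u E e R d n w :: real
  assumes "A * u = E * e * R"
  shows "d * d * d * R * (E * n) * (w * e) = d * d * (A * (d * (n * (u * w))))"
proof -
  have "d * d * (A * (d * (n * (u * w)))) = d * d * d * n * w * (A * u)" by (simp add: mult_ac)
  also have "\<dots> = d * d * d * n * w * (E * e * R)" by (simp add: assms)
  also have "\<dots> = d * d * d * R * (E * n) * (w * e)" by (simp add: mult_ac)
  finally show ?thesis by (metis mult.commute)
qed

theorem lemma5p1:
  fixes a b R :: real
    and N :: "real \<Rightarrow> nat"
    and z :: "real \<Rightarrow> nat \<Rightarrow> real^'d"
    and cbar :: "real \<Rightarrow> real"
    and \<rho> :: "real^'d \<Rightarrow> real"
  assumes ab: "a > 0" "b > 0"
    and cryst: "\<And>\<epsilon>. 0 < \<epsilon> \<Longrightarrow> \<epsilon> < 1 \<Longrightarrow>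
        crystal a b (N \<epsilon>) (z \<epsilon>) \<and> centered (N \<epsilon>) (z \<epsilon>) \<and> inf_rigid a (N \<epsilon>) (z \<epsilon>)"
    and cb: "\<And>\<epsilon>. 0 < \<epsilon> \<Longrightarrow> \<epsilon> < 1 \<Longrightarrow> cbar_ok (N \<epsilon>) (z \<epsilon>) (cbar \<epsilon>)"
    and R: "R > 0" "\<And>\<epsilon> i. 0 < \<epsilon> \<Longrightarrow> \<epsilon> < 1 \<Longrightarrow> i < N \<epsilon> \<Longrightarrow> norm (z \<epsilon> i) \<le> R / \<epsilon>"
    and rho: "\<rho> \<in> borel_measurable lborel" "\<And>y. \<rho> y \<ge> 0" "integrable lborel \<rho>"
    and weak: "\<And>f :: real^'d \<Rightarrow> real. continuous_on UNIV f \<Longrightarrow> bounded (range f) \<Longrightarrow>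
        ((\<lambda>\<epsilon>. \<epsilon> ^ CARD('d) * (\<Sum>i<N \<epsilon>. f (\<epsilon> *\<^sub>R z \<epsilon> i)))
           \<longlongrightarrow> (LINT y|lborel. f y * \<rho> y)) (at_right 0)"
    and mass: "(LINT y|lborel. \<rho> y) > 0"
    and diag: "\<And>\<alpha> \<beta>. \<alpha> \<noteq> \<beta> \<Longrightarrow> Qbar \<rho> $ \<alpha> $ \<beta> = 0"
  shows
    "(\<forall>\<nu>>0. \<exists>\<epsilon>0>0. \<epsilon>0 < 1 \<and> (\<exists>C. \<forall>\<epsilon>. 0 < \<epsilon> \<and> \<epsilon> \<le> \<epsilon>0 \<longrightarrow>
        (\<forall>x\<in>Minf (N \<epsilon>) (z \<epsilon>) (cbar \<epsilon>) (min (\<epsilon> powr (\<nu> - 1)) (cbar \<epsilon>)).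
           bij_betw (Phi_eps \<epsilon> (N \<epsilon>) (z \<epsilon>) x) sod sod \<and>
           so_opnorm (so_inv (Phi_eps \<epsilon> (N \<epsilon>) (z \<epsilon>) x)) \<le> C)))
     \<and>
     (\<forall>\<nu>>0. bij_betw (Phi (Qbar \<rho>)) sod sod \<and>
        (\<forall>e>0. \<forall>\<^sub>F \<epsilon> in at_right 0.
           \<forall>x\<in>Minf (N \<epsilon>) (z \<epsilon>) (cbar \<epsilon>) (min (\<epsilon> powr (\<nu> - 1)) (cbar \<epsilon>)).
             bij_betw (Phi_eps \<epsilon> (N \<epsilon>) (z \<epsilon>) x) sod sod \<and>
             so_opnorm (\<lambda>X. so_inv (Phi_eps \<epsilon> (N \<epsilon>) (z \<epsilon>) x) X - so_inv (Phi (Qbar \<rho>)) X) \<le> e))"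
proof -
  let ?Qb = "Qbar \<rho>"
  define cl where "cl = (\<lambda>t::real. max (-R) (min R t))"
  define fab where "fab a b = (\<lambda>y::real^'d. cl (y$a) * cl (y$b))" for a b
  have ev01: "\<forall>\<^sub>F \<epsilon> in at_right (0::real). 0 < \<epsilon> \<and> \<epsilon> < 1"
    unfolding eventually_at_right_field by (rule exI[of _ 1]) auto
  have nz: "norm (\<epsilon> *\<^sub>R z \<epsilon> i) \<le> R" if "0 < \<epsilon>" "\<epsilon> < 1" "i < N \<epsilon>" for \<epsilon> i
  proof -
    have "norm (\<epsilon> *\<^sub>R z \<epsilon> i) = \<epsilon> * norm (z \<epsilon> i)" using that by simp
    also have "\<dots> \<le> \<epsilon> * (R / \<epsilon>)" using R(2)[OF that] that by (intro mult_left_mono) auto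
    also have "\<dots> = R" using that by simp
    finally show ?thesis .
  qed
  have F1: "((\<lambda>\<epsilon>. \<epsilon> ^ CARD('d) * real (N \<epsilon>)) \<longlongrightarrow> (LINT y|lborel. \<rho> y)) (at_right 0)"
  proof -
    have "bounded (range (\<lambda>_::real^'d. 1::real))" unfolding bounded_iff by (rule exI[of _ 1]) auto
    from weak[OF continuous_on_const this] show ?thesis by simp
  qed
  define g where "g = (\<lambda>y::real^'d. min 1 (max 0 (norm y - R)))"
  have g_cont: "continuous_on UNIV g" unfolding g_def by (intro continuous_intros)
  have g_bd: "bounded (range g)" unfolding g_def bounded_iff by (rule exI[of _ 1]) auto
  have g_meas: "(\<lambda>y. g y * \<rho> y) \<in> borel_measurable lborel" unfolding g_def using rho(1) by measurable
  have glim: "((\<lambda>\<epsilon>. \<epsilon> ^ CARD('d) * (\<Sum>i<N \<epsilon>. g (\<epsilon> *\<^sub>R z \<epsilon> i))) \<longlongrightarrow> (LINT y|lborel. g y * \<rho> y)) (at_right 0)"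
    by (rule weak[OF g_cont g_bd])
  have "\<forall>\<^sub>F \<epsilon> in at_right (0::real). \<epsilon> ^ CARD('d) * (\<Sum>i<N \<epsilon>. g (\<epsilon> *\<^sub>R z \<epsilon> i)) = 0"
    using ev01
  proof eventually_elim
    case (elim \<epsilon>)
    have "g (\<epsilon> *\<^sub>R z \<epsilon> i) = 0" if "i < N \<epsilon>" for i using nz[of \<epsilon> i] elim that by (simp add: g_def)
    then show ?case by simp
  qed
  then have "((\<lambda>\<epsilon>. \<epsilon> ^ CARD('d) * (\<Sum>i<N \<epsilon>. g (\<epsilon> *\<^sub>R z \<epsilon> i))) \<longlongrightarrow> 0) (at_right 0)"
    by (rule tendsto_eventually)
  then have gint: "(LINT y|lborel. g y * \<rho> y) = 0"
    using tendsto_unique[OF trivial_limit_at_right_real glim] by simp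
  have gintb: "integrable lborel (\<lambda>y. g y * \<rho> y)"
    by (rule Bochner_Integration.integrable_bound[OF rho(3) g_meas]) (auto simp: g_def abs_mult rho(2) intro!: mult_left_le_one_le)
  have "AE y in lborel. g y * \<rho> y = 0"
    using integral_nonneg_eq_0_iff_AE[OF gintb] gint rho(2) by (simp add: g_def)
  then have supp: "AE y in lborel. R < norm y \<longrightarrow> \<rho> y = 0"
    by eventually_elim (auto simp: g_def)
  have cl_id: "cl t = t" if "\<bar>t\<bar> \<le> R" for t using that by (auto simp: cl_def)
  have fab_cont: "continuous_on UNIV (fab a b)" for a b
    unfolding fab_def cl_def by (intro continuous_intros continuous_on_component continuous_on_id)
  have fab_bd: "\<bar>fab a b y\<bar> \<le> R * R" for a b y
    unfolding fab_def cl_def abs_mult using R(1) by (intro mult_mono) auto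
  have fab_bdd: "bounded (range (fab a b))" for a b
    unfolding bounded_iff using fab_bd by (intro exI[of _ "R*R"]) auto
  have fab_meas: "(\<lambda>y. fab a b y * \<rho> y) \<in> borel_measurable lborel" for a b
    unfolding fab_def cl_def using rho(1) by measurable
  have fab_int: "integrable lborel (\<lambda>y. fab a b y * \<rho> y)" for a b
  proof (rule Bochner_Integration.integrable_bound[OF _ fab_meas])
    show "integrable lborel (\<lambda>y. R * R * \<rho> y)" using rho(3) by simp
    show "AE y in lborel. norm (fab a b y * \<rho> y) \<le> norm (R * R * \<rho> y)"
      using fab_bd rho(2) R(1) by (auto simp: abs_mult intro!: mult_right_mono)
  qed
  have int_eq: "(LINT y|lborel. fab a b y * \<rho> y) = ?Qb $ a $ b" for a b
  proof -
    have "(LINT y|lborel. fab a b y * \<rho> y) = (LINT y|lborel. y $ a * y $ b * \<rho> y)"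
    proof (rule integral_cong_AE[OF fab_meas])
      show "(\<lambda>y. y $ a * y $ b * \<rho> y) \<in> borel_measurable lborel" using rho(1) by measurable
      show "AE y in lborel. fab a b y * \<rho> y = y $ a * y $ b * \<rho> y"
        using supp
      proof eventually_elim
        case (elim y)
        show ?case
        proof (cases "R < norm y")
          case True then show ?thesis using elim by simp
        next
          case False
          then have "\<bar>y$a\<bar> \<le> R" "\<bar>y$b\<bar> \<le> R" using component_le_norm_cart[of y] by (metis order_trans not_less)+
          then show ?thesis by (simp add: fab_def cl_id)
        qed
      qed
    qed
    then show ?thesis by (simp add: Qbar_def)
  qed
  have F2: "((\<lambda>\<epsilon>. \<epsilon> ^ (CARD('d) + 2) * Qmat (N \<epsilon>) (z \<epsilon>) (z \<epsilon>) $ a $ b) \<longlongrightarrow> ?Qb $ a $ b) (at_right 0)" for a b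
  proof -
    have lim: "((\<lambda>\<epsilon>. \<epsilon> ^ CARD('d) * (\<Sum>i<N \<epsilon>. fab a b (\<epsilon> *\<^sub>R z \<epsilon> i))) \<longlongrightarrow> ?Qb $ a $ b) (at_right 0)"
      using weak[OF fab_cont fab_bdd] int_eq by simp
    have "\<forall>\<^sub>F \<epsilon> in at_right (0::real). \<epsilon> ^ CARD('d) * (\<Sum>i<N \<epsilon>. fab a b (\<epsilon> *\<^sub>R z \<epsilon> i))
        = \<epsilon> ^ (CARD('d) + 2) * Qmat (N \<epsilon>) (z \<epsilon>) (z \<epsilon>) $ a $ b"
      using ev01
    proof eventually_elim
      case (elim \<epsilon>)
      have "fab a b (\<epsilon> *\<^sub>R z \<epsilon> i) = \<epsilon>^2 * (z \<epsilon> i $ a * z \<epsilon> i $ b)" if "i < N \<epsilon>" for i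
      proof -
        have "\<bar>(\<epsilon> *\<^sub>R z \<epsilon> i) $ c\<bar> \<le> R" for c
          using component_le_norm_cart[of "\<epsilon> *\<^sub>R z \<epsilon> i" c] nz[of \<epsilon> i] elim that by linarith
        then show ?thesis unfolding fab_def using cl_id by (simp add: power2_eq_square)
      qed
      then have "(\<Sum>i<N \<epsilon>. fab a b (\<epsilon> *\<^sub>R z \<epsilon> i)) = \<epsilon>^2 * (\<Sum>i<N \<epsilon>. z \<epsilon> i $ a * z \<epsilon> i $ b)"
        by (simp add: sum_distrib_left)
      then show ?case by (simp add: Qmat_def power_add power2_eq_square)
    qed
    from tendsto_cong[OF this] lim show ?thesis by simp
  qed
  have pos: "0 < ?Qb $ a $ a" for a
  proof (rule ccontr)
    assume "\<not> 0 < ?Qb $ a $ a"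
    moreover have nn: "AE y in lborel. 0 \<le> fab a a y * \<rho> y"
      using rho(2) by (auto simp: fab_def)
    moreover have "0 \<le> (LINT y|lborel. fab a a y * \<rho> y)"
      by (rule integral_nonneg_AE[OF nn])
    ultimately have "(LINT y|lborel. fab a a y * \<rho> y) = 0" using int_eq[of a a] by simp
    then have ae0: "AE y in lborel. fab a a y * \<rho> y = 0"
      using integral_nonneg_eq_0_iff_AE[OF fab_int nn] by simp
    have "{y::real^'d. y $ a = 0} \<in> null_sets lebesgue"
      using negligible_standard_hyperplane_cart[of a] negligible_iff_null_sets by blast
    moreover have "{y::real^'d. y $ a = 0} \<in> sets lborel" by measurable
    ultimately have "{y::real^'d. y $ a = 0} \<in> null_sets lborel"
      using null_sets_completion_iff by blast
    then have "AE y in lborel. y \<notin> {y::real^'d. y $ a = 0}" by (rule AE_not_in)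
    with ae0 have "AE y in lborel. \<rho> y = 0"
    proof eventually_elim
      case (elim y)
      have "cl (y $ a) \<noteq> 0" using elim(2) R(1) by (auto simp: cl_def max_def min_def)
      then show ?case using elim(1) by (simp add: fab_def)
    qed
    then have "(LINT y|lborel. \<rho> y) = (LINT (y::real^'d)|lborel. (0::real))"
      by (rule integral_cong_AE[OF rho(1) borel_measurable_const])
    then show False using mass by simp
  qed
  define qm where "qm = Min (range (\<lambda>a. ?Qb $ a $ a))"
  have qm_pos: "0 < qm" unfolding qm_def using pos by (subst Min_gr_iff) auto
  have qm_le: "qm \<le> ?Qb $ a $ a" for a unfolding qm_def by (rule Min_le) auto
  have coer: "(?Qb ** X) \<bullet> X \<ge> qm * (norm X)^2" if "X \<in> sod" for X
  proof -
    have row: "(?Qb ** X) $ a $ b = ?Qb $ a $ a * X $ a $ b" for a b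
    proof -
      have hk: "?Qb $ a $ k * X $ k $ b = (if k = a then ?Qb $ a $ a * X $ a $ b else 0)" for k
        using diag[of a k] by (cases "k = a") simp_all
      have "(\<Sum>k\<in>UNIV. ?Qb $ a $ k * X $ k $ b) = (\<Sum>k\<in>UNIV. (if k = a then ?Qb $ a $ a * X $ a $ b else 0))"
        by (intro sum.cong refl hk)
      then have "(\<Sum>k\<in>UNIV. ?Qb $ a $ k * X $ k $ b) = ?Qb $ a $ a * X $ a $ b"
        by simp
      then show ?thesis unfolding matrix_matrix_mult_def by simp
    qed
    have "qm * (norm X)^2 = (\<Sum>a\<in>UNIV. \<Sum>b\<in>UNIV. qm * (X$a$b * X$a$b))"
      by (simp add: power2_norm_eq_inner inner_mat sum_distrib_left)
    also have "\<dots> \<le> (\<Sum>a\<in>UNIV. \<Sum>b\<in>UNIV. ?Qb $ a $ a * X $ a $ b * X $ a $ b)"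
      by (intro sum_mono) (simp add: mult.assoc mult_right_mono qm_le)
    also have "\<dots> = (?Qb ** X) \<bullet> X" by (simp add: inner_mat row)
    finally show ?thesis .
  qed
  have key: "\<forall>\<^sub>F \<epsilon> in at_right 0. 0 < \<epsilon> \<and> \<epsilon> < 1 \<and>
      (\<forall>x\<in>Minf (N \<epsilon>) (z \<epsilon>) (cbar \<epsilon>) (min (\<epsilon> powr (\<nu> - 1)) (cbar \<epsilon>)).
        l1m ((\<epsilon> ^ (CARD('d) + 2) *\<^sub>R Qmat (N \<epsilon>) (z \<epsilon>) x) ** theta_of (N \<epsilon>) (z \<epsilon>) x - ?Qb) \<le> \<delta>)"
    if \<nu>: "\<nu> > 0" and \<delta>: "\<delta> > 0" for \<nu> \<delta>
  proof -
    define T1 where "T1 \<epsilon> = l1m (\<epsilon> ^ (CARD('d) + 2) *\<^sub>R Qmat (N \<epsilon>) (z \<epsilon>) (z \<epsilon>) - ?Qb)" for \<epsilon>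
    define T2 where "T2 \<epsilon> = real CARD('d) * real CARD('d) * (\<epsilon> ^ (CARD('d) + 2) * (real CARD('d) * (real (N \<epsilon>) * (R / \<epsilon> * \<epsilon> powr (\<nu> - 1)))))" for \<epsilon>
    have T1: "(T1 \<longlongrightarrow> 0) (at_right 0)"
    proof -
      have "((\<lambda>\<epsilon>. \<Sum>a\<in>UNIV. \<Sum>b\<in>UNIV. \<bar>\<epsilon> ^ (CARD('d) + 2) * Qmat (N \<epsilon>) (z \<epsilon>) (z \<epsilon>) $ a $ b - ?Qb $ a $ b\<bar>)
          \<longlongrightarrow> (\<Sum>a\<in>(UNIV::'d set). \<Sum>b\<in>(UNIV::'d set). \<bar>?Qb $ a $ b - ?Qb $ a $ b\<bar>)) (at_right 0)"
        by (intro tendsto_sum tendsto_rabs tendsto_diff F2 tendsto_const)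
      moreover have "T1 = (\<lambda>\<epsilon>. \<Sum>a\<in>UNIV. \<Sum>b\<in>UNIV. \<bar>\<epsilon> ^ (CARD('d) + 2) * Qmat (N \<epsilon>) (z \<epsilon>) (z \<epsilon>) $ a $ b - ?Qb $ a $ b\<bar>)"
        by (simp add: fun_eq_iff T1_def l1m_def)
      ultimately show ?thesis by simp
    qed
    define K3 where "K3 = real CARD('d) * real CARD('d) * real CARD('d) * R"
    have T2: "(T2 \<longlongrightarrow> 0) (at_right 0)"
    proof -
      have ev: "\<forall>\<^sub>F \<epsilon> in at_right (0::real). K3 * (\<epsilon> ^ CARD('d) * real (N \<epsilon>)) * \<epsilon> powr \<nu> = T2 \<epsilon>"
        using ev01
      proof eventually_elim
        case (elim \<epsilon>)
        have p: "\<epsilon> powr \<nu> = \<epsilon> powr (\<nu> - 1) * \<epsilon>" using powr_add[of \<epsilon> "\<nu> - 1" 1] elim by simp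
        have "\<epsilon> ^ (CARD('d) + 2) * (R / \<epsilon>) = \<epsilon> ^ CARD('d) * \<epsilon> * R"
          using elim by (simp add: power_add power2_eq_square)
        then show ?case unfolding T2_def K3_def p by (rule ring_aux)
      qed
      have "((\<lambda>\<epsilon>. K3 * (\<epsilon> ^ CARD('d) * real (N \<epsilon>)) * \<epsilon> powr \<nu>)
          \<longlongrightarrow> K3 * (LINT y|lborel. \<rho> y) * 0) (at_right 0)"
      proof (intro tendsto_mult tendsto_const F1)
        show "((\<lambda>\<epsilon>::real. \<epsilon> powr \<nu>) \<longlongrightarrow> 0) (at_right 0)"
          by (rule tendsto_zero_powrI[of "\<lambda>x. x" _ "\<lambda>_. \<nu>" \<nu>])
             (auto simp: \<nu> eventually_at_right_field intro: tendsto_ident_at exI[of _ 1])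
      qed
      then have "((\<lambda>\<epsilon>. K3 * (\<epsilon> ^ CARD('d) * real (N \<epsilon>)) * \<epsilon> powr \<nu>) \<longlongrightarrow> 0) (at_right 0)" by simp
      then show ?thesis by (rule Lim_transform_eventually[OF _ ev])
    qed
    have "((\<lambda>\<epsilon>. T1 \<epsilon> + T2 \<epsilon>) \<longlongrightarrow> 0 + 0) (at_right 0)" by (intro tendsto_add T1 T2)
    then have "\<forall>\<^sub>F \<epsilon> in at_right 0. T1 \<epsilon> + T2 \<epsilon> < \<delta>" using \<delta> by (simp add: order_tendstoD(2))
    with ev01 show ?thesis
    proof eventually_elim
      case (elim \<epsilon>)
      have e: "0 < \<epsilon>" "\<epsilon> < 1" using elim by auto
      have "l1m ((\<epsilon> ^ (CARD('d) + 2) *\<^sub>R Qmat (N \<epsilon>) (z \<epsilon>) x) ** theta_of (N \<epsilon>) (z \<epsilon>) x - ?Qb) \<le> \<delta>"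
        if x: "x \<in> Minf (N \<epsilon>) (z \<epsilon>) (cbar \<epsilon>) (min (\<epsilon> powr (\<nu> - 1)) (cbar \<epsilon>))" for x
      proof -
        have x': "x \<in> Minf (N \<epsilon>) (z \<epsilon>) (cbar \<epsilon>) (\<epsilon> powr (\<nu> - 1))"
          using x by (auto simp: Minf_def)
        have "l1m ((\<epsilon> ^ (CARD('d) + 2) *\<^sub>R Qmat (N \<epsilon>) (z \<epsilon>) x) ** theta_of (N \<epsilon>) (z \<epsilon>) x - ?Qb)
           \<le> T1 \<epsilon> + real CARD('d) * real CARD('d) * (\<bar>\<epsilon> ^ (CARD('d) + 2)\<bar> * (real CARD('d) * (real (N \<epsilon>) * (R / \<epsilon> * \<epsilon> powr (\<nu> - 1)))))"
          unfolding T1_def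
          by (rule pointwise[OF conjunct1[OF conjunct2[OF cryst[OF e]]] cb[OF e] x' R(2)[OF e]])
        also have "\<dots> = T1 \<epsilon> + T2 \<epsilon>" using e by (simp add: T2_def)
        finally show ?thesis using elim by linarith
      qed
      then show ?case using e by blast
    qed
  qed
  have PhiE: "Phi_eps \<epsilon> (N \<epsilon>) (z \<epsilon>) x = LQ ((\<epsilon> ^ (CARD('d) + 2) *\<^sub>R Qmat (N \<epsilon>) (z \<epsilon>) x) ** theta_of (N \<epsilon>) (z \<epsilon>) x)" for \<epsilon> x
    by (rule ext) (simp add: Phi_eps_def LQ_def)
  have PhiB: "Phi ?Qb = LQ ?Qb" by (rule ext) (simp add: Phi_def LQ_def)
  have l1m0: "l1m (?Qb - ?Qb) \<le> 0" by (simp add: l1m_def)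
  have bijB: "bij_betw (Phi ?Qb) sod sod"
    using abstract(2)[OF qm_pos coer l1m0] qm_pos unfolding PhiB by simp
  define P where "P \<nu> \<delta> \<epsilon> \<longleftrightarrow> (\<forall>x\<in>Minf (N \<epsilon>) (z \<epsilon>) (cbar \<epsilon>) (min (\<epsilon> powr (\<nu> - 1)) (cbar \<epsilon>)).
        bij_betw (Phi_eps \<epsilon> (N \<epsilon>) (z \<epsilon>) x) sod sod \<and>
        so_opnorm (so_inv (Phi_eps \<epsilon> (N \<epsilon>) (z \<epsilon>) x)) \<le> 2 / qm \<and>
        so_opnorm (\<lambda>X. so_inv (Phi_eps \<epsilon> (N \<epsilon>) (z \<epsilon>) x) X - so_inv (Phi ?Qb) X) \<le> 2 * \<delta> / qm^2)"
    for \<nu> \<delta> \<epsilon>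
  have main: "\<forall>\<^sub>F \<epsilon> in at_right 0. P \<nu> \<delta> \<epsilon>"
    if \<nu>: "\<nu> > 0" and \<delta>: "\<delta> > 0" "\<delta> \<le> qm / 2" for \<nu> \<delta>
    using key[OF \<nu> \<delta>(1)]
  proof eventually_elim
    case (elim \<epsilon>)
    show ?case unfolding P_def
    proof (intro conjI ballI)
      fix x assume x: "x \<in> Minf (N \<epsilon>) (z \<epsilon>) (cbar \<epsilon>) (min (\<epsilon> powr (\<nu> - 1)) (cbar \<epsilon>))"
      have l: "l1m ((\<epsilon> ^ (CARD('d) + 2) *\<^sub>R Qmat (N \<epsilon>) (z \<epsilon>) x) ** theta_of (N \<epsilon>) (z \<epsilon>) x - ?Qb) \<le> \<delta>"
        using elim x by blast
      note A = abstract[OF qm_pos coer l \<delta>(2)]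
      show "bij_betw (Phi_eps \<epsilon> (N \<epsilon>) (z \<epsilon>) x) sod sod" unfolding PhiE by (rule A(1))
      show "so_opnorm (so_inv (Phi_eps \<epsilon> (N \<epsilon>) (z \<epsilon>) x)) \<le> 2 / qm" unfolding PhiE by (rule A(3))
      show "so_opnorm (\<lambda>X. so_inv (Phi_eps \<epsilon> (N \<epsilon>) (z \<epsilon>) x) X - so_inv (Phi ?Qb) X) \<le> 2 * \<delta> / qm^2"
        unfolding PhiE PhiB by (rule A(4))
    qed
  qed
  show ?thesis
  proof (intro conjI allI impI)
    fix \<nu> :: real assume \<nu>: "\<nu> > 0"
    have "qm / 2 > 0" "qm / 2 \<le> qm / 2" using qm_pos by auto
    from main[OF \<nu> this] obtain b where b: "b > 0" and hb: "\<And>\<epsilon>. \<epsilon> > 0 \<Longrightarrow> \<epsilon> < b \<Longrightarrow> P \<nu> (qm/2) \<epsilon>"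
      unfolding eventually_at_right_field by blast
    show "\<exists>\<epsilon>0>0. \<epsilon>0 < 1 \<and> (\<exists>C. \<forall>\<epsilon>. 0 < \<epsilon> \<and> \<epsilon> \<le> \<epsilon>0 \<longrightarrow>
        (\<forall>x\<in>Minf (N \<epsilon>) (z \<epsilon>) (cbar \<epsilon>) (min (\<epsilon> powr (\<nu> - 1)) (cbar \<epsilon>)).
           bij_betw (Phi_eps \<epsilon> (N \<epsilon>) (z \<epsilon>) x) sod sod \<and>
           so_opnorm (so_inv (Phi_eps \<epsilon> (N \<epsilon>) (z \<epsilon>) x)) \<le> C))"
    proof (rule exI[of _ "min (b/2) (1/2)"], intro conjI exI[of _ "2 / qm"] allI impI)
      fix \<epsilon> assume e: "0 < \<epsilon> \<and> \<epsilon> \<le> min (b/2) (1/2)"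
      have "0 < \<epsilon>" "\<epsilon> < b" using e b by auto
      from hb[OF this] have "P \<nu> (qm/2) \<epsilon>" .
      then show "\<forall>x\<in>Minf (N \<epsilon>) (z \<epsilon>) (cbar \<epsilon>) (min (\<epsilon> powr (\<nu> - 1)) (cbar \<epsilon>)).
           bij_betw (Phi_eps \<epsilon> (N \<epsilon>) (z \<epsilon>) x) sod sod \<and>
           so_opnorm (so_inv (Phi_eps \<epsilon> (N \<epsilon>) (z \<epsilon>) x)) \<le> 2 / qm"
        unfolding P_def by blast
    qed (use b in auto)
  next
    fix \<nu> :: real assume \<nu>: "\<nu> > 0"
    show "bij_betw (Phi ?Qb) sod sod" by (rule bijB)
  next
    fix \<nu> e :: real assume \<nu>: "\<nu> > 0" and e: "e > 0"
      define \<delta> where "\<delta> = min (qm / 2) (e * qm^2 / 2)"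
      have d: "\<delta> > 0" "\<delta> \<le> qm / 2" using qm_pos e by (auto simp: \<delta>_def)
      have de: "2 * \<delta> / qm^2 \<le> e"
      proof -
        have "2 * \<delta> \<le> e * qm^2" by (simp add: \<delta>_def)
        then show ?thesis using qm_pos by (simp add: divide_le_eq)
      qed
      from main[OF \<nu> d] show "\<forall>\<^sub>F \<epsilon> in at_right 0.
           \<forall>x\<in>Minf (N \<epsilon>) (z \<epsilon>) (cbar \<epsilon>) (min (\<epsilon> powr (\<nu> - 1)) (cbar \<epsilon>)).
             bij_betw (Phi_eps \<epsilon> (N \<epsilon>) (z \<epsilon>) x) sod sod \<and>
             so_opnorm (\<lambda>X. so_inv (Phi_eps \<epsilon> (N \<epsilon>) (z \<epsilon>) x) X - so_inv (Phi ?Qb) X) \<le> e"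
      proof eventually_elim
        case (elim \<epsilon>)
        show ?case
        proof
          fix x assume x: "x \<in> Minf (N \<epsilon>) (z \<epsilon>) (cbar \<epsilon>) (min (\<epsilon> powr (\<nu> - 1)) (cbar \<epsilon>))"
          have "bij_betw (Phi_eps \<epsilon> (N \<epsilon>) (z \<epsilon>) x) sod sod \<and>
             so_opnorm (\<lambda>X. so_inv (Phi_eps \<epsilon> (N \<epsilon>) (z \<epsilon>) x) X - so_inv (Phi ?Qb) X) \<le> 2 * \<delta> / qm^2"
            using elim x unfolding P_def by blast
          then show "bij_betw (Phi_eps \<epsilon> (N \<epsilon>) (z \<epsilon>) x) sod sod \<and>
             so_opnorm (\<lambda>X. so_inv (Phi_eps \<epsilon> (N \<epsilon>) (z \<epsilon>) x) X - so_inv (Phi ?Qb) X) \<le> e"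
            using de by linarith
        qed
      qed
  qed
qed

end
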